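(* Let $v$ be a node that is seed-infected at time step $t$ during the execution of the Follow algorithm (described in the context), and let $e$ be an edge adjacent to $v$ with $\lambda(e)\in\{t+1,\dots,t+\delta\}$. Then during the execution there is a round with a successful infection via $e$ (from $v$ or to $v$).
   Context: A temporal graph $\mathcal G=(V,E,\lambda)$ with lifetime $T_{\max}$ consists of a finite undirected static graph $(V,E)$ and a labeling $\lambda:E\to\{1,\dots,T_{\max}\}$; edge $e$ is present only at time $\lambda(e)$. Infection model with parameter $\delta\in\mathbb N^+$: a seed $(u,t)$ makes $u$ infected at time $t$; otherwise a susceptible node $u$ becomes infected at time $t$ iff some neighbour $v$ infectious at time $t$ has $\lambda(uv)=t$ (exactly one infector recorded if several exist). A node infected at time $t$ is infectious at times $t+1,\dots,t+\delta$ and resistant afterwards. Each round, the Discoverer submits seed infections and observes an infection log (triples $(u,v,t)$: $u$ infected $v$ at time $t$). Subroutine Explore$(u,t)$: for each $t'\in\{t-\delta-1,t-1,t\}$, if no round with seed $(u,t')$ was performed, perform a round with the single seed $(u,t')$ and record it; then for each newly observed successful infection along an edge $uv$ at time $t''$, call Explore$(v,t'')$. Algorithm Follow: pick any node $v_0$; for each $i\in[0,\lceil T_{\max}/\delta\rceil]$ perform a round with single seed $(v_0,i\delta)$; for each edge $e=v_0u$ along which an infection succeeds, call Explore$(u,\lambda(e))$. *)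

theory Defs
  imports Complex_Main
begin

text \<open>Times are integers
  (seeds may be placed at times <= 0, e.g. t - delta - 1).\<close>

definition temporal_graph :: "'v set \<Rightarrow> 'v set set \<Rightarrow> ('v set \<Rightarrow> int) \<Rightarrow> int \<Rightarrow> bool" where
  "temporal_graph V E lam Tmax \<longleftrightarrow> finite V \<and>
     (\<forall>e\<in>E. \<exists>u w. u \<in> V \<and> w \<in> V \<and> u \<noteq> w \<and> e = {u, w}) \<and>
     (\<forall>e\<in>E. 1 \<le> lam e \<and> lam e \<le> Tmax)"

definition infectious :: "int \<Rightarrow> ('v \<Rightarrow> int option) \<Rightarrow> 'v \<Rightarrow> int \<Rightarrow> bool" where
  "infectious \<delta> f u \<tau> \<longleftrightarrow> (\<exists>\<tau>'. f u = Some \<tau>' \<and> \<tau>' < \<tau> \<and> \<tau> \<le> \<tau>' + \<delta>)"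

definition can_infect :: "'v set set \<Rightarrow> ('v set \<Rightarrow> int) \<Rightarrow> int \<Rightarrow> ('v \<Rightarrow> int option)
    \<Rightarrow> 'v \<Rightarrow> 'v \<Rightarrow> int \<Rightarrow> bool" where
  "can_infect E lam \<delta> f u w \<tau> \<longleftrightarrow> infectious \<delta> f u \<tau> \<and> {u, w} \<in> E \<and> lam {u, w} = \<tau>"

text \<open>f is the infection-time function of the round with single seed (s,t0):
  the seed is infected at t0; any other node w is infected at time tau iff it is
  still susceptible at tau (not infected earlier, i.e. no earlier infection
  opportunity) and some infectious neighbour meets it via an edge labelled tau.\<close>
definition infection_run :: "'v set set \<Rightarrow> ('v set \<Rightarrow> int) \<Rightarrow> int \<Rightarrow> 'v \<times> int
    \<Rightarrow> ('v \<Rightarrow> int option) \<Rightarrow> bool" where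
  "infection_run E lam \<delta> s f \<longleftrightarrow> f (fst s) = Some (snd s) \<and>
     (\<forall>w \<tau>. w \<noteq> fst s \<longrightarrow>
        (f w = Some \<tau> \<longleftrightarrow>
           (\<exists>u. can_infect E lam \<delta> f u w \<tau>) \<and>
           (\<forall>\<tau>2 < \<tau>. \<not> (\<exists>u. can_infect E lam \<delta> f u w \<tau>2))))"

text \<open>L is a possible infection log of the round with single seed s: a set of
  triples (u, w, tau) ("u infected w at time tau"), recording exactly one
  (arbitrary) valid infector for every non-seed node that gets infected.\<close>
definition valid_log :: "'v set set \<Rightarrow> ('v set \<Rightarrow> int) \<Rightarrow> int \<Rightarrow> 'v \<times> int
    \<Rightarrow> ('v \<times> 'v \<times> int) set \<Rightarrow> bool" where
  "valid_log E lam \<delta> s L \<longleftrightarrow> (\<exists>f. infection_run E lam \<delta> s f \<and>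
     (\<forall>(u, w, \<tau>) \<in> L. w \<noteq> fst s \<and> f w = Some \<tau> \<and> can_infect E lam \<delta> f u w \<tau>) \<and>
     (\<forall>w \<tau>. w \<noteq> fst s \<and> f w = Some \<tau> \<longrightarrow> (\<exists>!u. (u, w, \<tau>) \<in> L)))"

text \<open>Lg s is the log observed for the round with single seed s.  In Follow no seed
  is ever used twice (Explore skips already performed seeds), so the (adversarial)
  choice of recorded infectors can be described by a fixed function Lg.\<close>

definition init_times :: "int \<Rightarrow> int \<Rightarrow> int set" where
  "init_times Tmax \<delta> = {i * \<delta> | i. 0 \<le> i \<and> i \<le> \<lceil>real_of_int Tmax / real_of_int \<delta>\<rceil>}"

definition explore_times :: "int \<Rightarrow> int \<Rightarrow> int set" where
  "explore_times \<delta> t = {t - \<delta> - 1, t - 1, t}"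

text \<open>Calls of Explore(u,t) made during the execution of Follow from v0.\<close>
inductive explore_called :: "int \<Rightarrow> int \<Rightarrow> 'v \<Rightarrow> ('v \<times> int \<Rightarrow> ('v \<times> 'v \<times> int) set)
    \<Rightarrow> 'v \<times> int \<Rightarrow> bool"
  for Tmax \<delta> v0 Lg where
  init: "t0 \<in> init_times Tmax \<delta> \<Longrightarrow> (v0, u, \<tau>) \<in> Lg (v0, t0)
           \<Longrightarrow> explore_called Tmax \<delta> v0 Lg (u, \<tau>)"
| step: "explore_called Tmax \<delta> v0 Lg (u, t) \<Longrightarrow> t' \<in> explore_times \<delta> t
           \<Longrightarrow> (u, w, \<tau>) \<in> Lg (u, t') \<Longrightarrow> explore_called Tmax \<delta> v0 Lg (w, \<tau>)"

definition performed :: "int \<Rightarrow> int \<Rightarrow> 'v \<Rightarrow> ('v \<times> int \<Rightarrow> ('v \<times> 'v \<times> int) set)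
    \<Rightarrow> 'v \<times> int \<Rightarrow> bool" where
  "performed Tmax \<delta> v0 Lg s \<longleftrightarrow>
     (\<exists>t0 \<in> init_times Tmax \<delta>. s = (v0, t0)) \<or>
     (\<exists>u t t'. explore_called Tmax \<delta> v0 Lg (u, t) \<and> t' \<in> explore_times \<delta> t \<and> s = (u, t'))"

end

theory Submission
  imports Defs
begin

lemma run_pos:
  assumes run: "infection_run E lam \<delta> s f" and pos: "\<forall>e\<in>E. 1 \<le> lam e"
    and "w \<noteq> fst s" "f w = Some \<tau>"
  shows "1 \<le> \<tau> \<and> (\<exists>u \<tau>'. f u = Some \<tau>' \<and> \<tau>' < \<tau> \<and> \<tau> \<le> \<tau>' + \<delta> \<and> {u,w} \<in> E \<and> lam {u,w} = \<tau>)"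
proof -
  from run assms have "\<exists>u. can_infect E lam \<delta> f u w \<tau>" unfolding infection_run_def by blast
  then show ?thesis using pos unfolding can_infect_def infectious_def by fastforce
qed

lemma run_after:
  assumes run: "infection_run E lam \<delta> s f" and pos: "\<forall>e\<in>E. 1 \<le> lam e"
  shows "w \<noteq> fst s \<Longrightarrow> f w = Some \<tau> \<Longrightarrow> snd s < \<tau>"
proof (induction "nat \<tau>" arbitrary: w \<tau> rule: less_induct)
  case less
  from run_pos[OF run pos less.prems] obtain u \<tau>' where u: "f u = Some \<tau>'" "\<tau>' < \<tau>"
    and t1: "1 \<le> \<tau>" by blast
  show ?case
  proof (cases "u = fst s")
    case True
    with run u have "\<tau>' = snd s" unfolding infection_run_def by simp
    with u show ?thesis by simp
  next
    case False
    from run_pos[OF run pos False u(1)] have "1 \<le> \<tau>'" by blast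
    with u t1 have "nat \<tau>' < nat \<tau>" by simp
    from less.hyps[OF this False u(1)] u show ?thesis by simp
  qed
qed

lemma run_reach:
  assumes run: "infection_run E lam \<delta> s f" and pos: "\<forall>e\<in>E. 1 \<le> lam e"
    and s: "s = (v, t0)" and e: "{v,w} \<in> E" "lam {v,w} = T" and T: "t0 < T" "T \<le> t0 + \<delta>"
    and wv: "w \<noteq> v"
  shows "\<exists>\<tau>. f w = Some \<tau> \<and> \<tau> \<le> T"
proof -
  define S where "S = {\<tau>2. (\<exists>u. can_infect E lam \<delta> f u w \<tau>2) \<and> \<tau>2 \<in> {1..T}}"
  have fv: "f v = Some t0" using run s unfolding infection_run_def by simp
  have "can_infect E lam \<delta> f v w T" using fv e T unfolding can_infect_def infectious_def by auto
  moreover have "1 \<le> T" using pos e by auto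
  ultimately have TS: "T \<in> S" unfolding S_def by auto
  have fin: "finite S" unfolding S_def by auto
  define m where "m = Min S"
  have mS: "m \<in> S" using TS fin m_def Min_in by blast
  have mle: "\<And>x. x \<in> S \<Longrightarrow> m \<le> x" using fin m_def by simp
  have nob: "\<forall>\<tau>2<m. \<not> (\<exists>u. can_infect E lam \<delta> f u w \<tau>2)"
  proof (intro allI impI notI)
    fix \<tau>2 assume lt: "\<tau>2 < m" and op: "\<exists>u. can_infect E lam \<delta> f u w \<tau>2"
    then have "1 \<le> \<tau>2" using pos unfolding can_infect_def by auto
    moreover have "\<tau>2 \<le> T" using lt mS unfolding S_def by auto
    ultimately have "\<tau>2 \<in> S" using op unfolding S_def by auto
    with mle lt show False by fastforce
  qed
  have "f w = Some m" using run s wv mS nob unfolding infection_run_def S_def by auto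
  then show ?thesis using mS unfolding S_def by auto
qed

lemma logged_child:
  assumes run: "infection_run E lam \<delta> s f" and pos: "\<forall>e\<in>E. 1 \<le> lam e"
    and s: "s = (v, t0)"
    and L1: "\<forall>(u, w, \<tau>) \<in> L. w \<noteq> v \<and> f w = Some \<tau> \<and> can_infect E lam \<delta> f u w \<tau>"
    and L2: "\<forall>w \<tau>. w \<noteq> v \<and> f w = Some \<tau> \<longrightarrow> (\<exists>!u. (u, w, \<tau>) \<in> L)"
  shows "x \<noteq> v \<Longrightarrow> f x = Some \<sigma> \<Longrightarrow> \<exists>p \<tau>1. (v, p, \<tau>1) \<in> L \<and> \<tau>1 \<le> \<sigma>"
proof (induction "nat \<sigma>" arbitrary: x \<sigma> rule: less_induct)
  case less
  have x1: "1 \<le> \<sigma>" using run_pos[OF run pos] less.prems s by auto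
  have "\<exists>!u. (u, x, \<sigma>) \<in> L" using L2[rule_format, of x \<sigma>] less.prems s by simp
  then obtain u where u: "(u, x, \<sigma>) \<in> L" by blast
  show ?case
  proof (cases "u = v")
    case True with u show ?thesis by auto
  next
    case False
    from L1 u have "can_infect E lam \<delta> f u x \<sigma>" by auto
    then obtain \<sigma>' where su: "f u = Some \<sigma>'" "\<sigma>' < \<sigma>" unfolding can_infect_def infectious_def by auto
    have "1 \<le> \<sigma>'" using run_pos[OF run pos] su False s by auto
    with su x1 have "nat \<sigma>' < nat \<sigma>" by simp
    from less.hyps[OF this False su(1)] su show ?thesis by force
  qed
qed

lemma performed_child:
  "performed Tmax \<delta> v0 Lg (v, t) \<Longrightarrow> (v, p, \<tau>) \<in> Lg (v, t) \<Longrightarrow> explore_called Tmax \<delta> v0 Lg (p, \<tau>)"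
  unfolding performed_def by (auto intro: explore_called.intros)

lemma explore_performed:
  "explore_called Tmax \<delta> v0 Lg (u, \<tau>) \<Longrightarrow> t' \<in> explore_times \<delta> \<tau> \<Longrightarrow> performed Tmax \<delta> v0 Lg (u, t')"
  unfolding performed_def by blast

lemma key:
  assumes pos: "\<forall>e\<in>E. 1 \<le> lam e" and d: "\<delta> \<ge> 1"
    and vl: "\<forall>s. valid_log E lam \<delta> s (Lg s)"
    and e: "{v,w} \<in> E" "lam {v,w} = T" and wv: "w \<noteq> v"
  shows "performed Tmax \<delta> v0 Lg (v, t) \<Longrightarrow> t < T \<Longrightarrow> T \<le> t + \<delta> \<Longrightarrow>
    \<exists>s. performed Tmax \<delta> v0 Lg s \<and> ((v, w, T) \<in> Lg s \<or> (w, v, T) \<in> Lg s)"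
proof (induction "nat (T - t)" arbitrary: t rule: less_induct)
  case less
  from vl obtain f where run: "infection_run E lam \<delta> (v, t) f"
    and L1: "\<forall>(u, x, \<tau>) \<in> Lg (v, t). x \<noteq> v \<and> f x = Some \<tau> \<and> can_infect E lam \<delta> f u x \<tau>"
    and L2: "\<forall>x \<tau>. x \<noteq> v \<and> f x = Some \<tau> \<longrightarrow> (\<exists>!u. (u, x, \<tau>) \<in> Lg (v, t))"
    unfolding valid_log_def by fastforce
  show ?case
  proof (cases "(v, w, T) \<in> Lg (v, t)")
    case True with less.prems show ?thesis by blast
  next
    case False
    from run_reach[OF run pos refl e less.prems(2,3) wv] obtain \<tau> where
      fw: "f w = Some \<tau>" "\<tau> \<le> T" by blast
    have "\<exists>!u. (u, w, \<tau>) \<in> Lg (v, t)" using L2[rule_format, of w \<tau>] fw wv by simp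
    then obtain u where u: "(u, w, \<tau>) \<in> Lg (v, t)" by blast
    have "\<exists>p \<tau>1. (v, p, \<tau>1) \<in> Lg (v, t) \<and> \<tau>1 < T"
    proof (cases "u = v")
      case True
      with u False fw have "\<tau> < T" by (cases "\<tau> = T") auto
      with u True show ?thesis by blast
    next
      case uv: False
      from L1 u have "can_infect E lam \<delta> f u w \<tau>" by auto
      then obtain \<sigma> where su: "f u = Some \<sigma>" "\<sigma> < \<tau>" unfolding can_infect_def infectious_def by auto
      from logged_child[OF run pos refl L1 L2 uv su(1)] obtain p \<tau>1 where
        "(v, p, \<tau>1) \<in> Lg (v, t)" "\<tau>1 \<le> \<sigma>" by blast
      with su fw show ?thesis by force
    qed
    then obtain p \<tau>1 where p: "(v, p, \<tau>1) \<in> Lg (v, t)" "\<tau>1 < T" by blast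
    from L1 p have pv: "p \<noteq> v" and fp: "f p = Some \<tau>1" and ci: "can_infect E lam \<delta> f v p \<tau>1" by auto
    have t1: "t < \<tau>1" using run_after[OF run pos, of p \<tau>1] pv fp by simp
    from ci have ep: "{v, p} \<in> E" "lam {v, p} = \<tau>1" unfolding can_infect_def by auto
    have ecp: "explore_called Tmax \<delta> v0 Lg (p, \<tau>1)" using performed_child[OF less.prems(1) p(1)] .
    from vl obtain g where run2: "infection_run E lam \<delta> (p, \<tau>1 - 1) g"
      and M1: "\<forall>(u, x, \<tau>) \<in> Lg (p, \<tau>1 - 1). x \<noteq> p \<and> g x = Some \<tau> \<and> can_infect E lam \<delta> g u x \<tau>"
      and M2: "\<forall>x \<tau>. x \<noteq> p \<and> g x = Some \<tau> \<longrightarrow> (\<exists>!u. (u, x, \<tau>) \<in> Lg (p, \<tau>1 - 1))"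
      unfolding valid_log_def by fastforce
    have ep': "{p, v} \<in> E" "lam {p, v} = \<tau>1" using ep by (auto simp: insert_commute)
    from run_reach[OF run2 pos refl ep'] d pv obtain \<tau>' where g1: "g v = Some \<tau>'" "\<tau>' \<le> \<tau>1" by auto
    have "\<tau>1 - 1 < \<tau>'" using run_after[OF run2 pos, of v \<tau>'] pv g1 by simp
    with g1 have gv: "g v = Some \<tau>1" by simp
    have "\<exists>!u. (u, v, \<tau>1) \<in> Lg (p, \<tau>1 - 1)" using M2[rule_format, of v \<tau>1] gv pv by simp
    then obtain u' where u': "(u', v, \<tau>1) \<in> Lg (p, \<tau>1 - 1)" by blast
    from M1 u' have "can_infect E lam \<delta> g u' v \<tau>1" by auto
    then obtain \<sigma> where su': "g u' = Some \<sigma>" "\<sigma> < \<tau>1"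
      unfolding can_infect_def infectious_def by auto
    have "u' = p"
    proof (rule ccontr)
      assume "u' \<noteq> p"
      then have "\<tau>1 - 1 < \<sigma>" using run_after[OF run2 pos, of u' \<sigma>] su' by simp
      with su' show False by simp
    qed
    with u' have lg: "(p, v, \<tau>1) \<in> Lg (p, \<tau>1 - 1)" by simp
    have et: "\<tau>1 - 1 \<in> explore_times \<delta> \<tau>1" unfolding explore_times_def by simp
    have "explore_called Tmax \<delta> v0 Lg (v, \<tau>1)"
      by (rule explore_called.step[OF ecp et lg])
    then have perf: "performed Tmax \<delta> v0 Lg (v, \<tau>1)"
      by (rule explore_performed) (simp add: explore_times_def)
    have "nat (T - \<tau>1) < nat (T - t)" using t1 p(2) by simp
    from less.hyps[OF this perf p(2)] t1 less.prems(3) show ?thesis by simp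
  qed
qed

theorem mainTheorem8:
  fixes V :: "'v set" and E :: "'v set set" and lam :: "'v set \<Rightarrow> int"
    and Tmax \<delta> :: int and v0 :: 'v
    and Lg :: "'v \<times> int \<Rightarrow> ('v \<times> 'v \<times> int) set"
    and v :: 'v and t :: int and e :: "'v set"
  assumes "temporal_graph V E lam Tmax"
    and "\<delta> \<ge> 1"
    and "v0 \<in> V"
    and "\<forall>s. valid_log E lam \<delta> s (Lg s)"
    and "performed Tmax \<delta> v0 Lg (v, t)"
    and "e \<in> E" and "v \<in> e"
    and "t + 1 \<le> lam e" and "lam e \<le> t + \<delta>"
  shows "\<exists>s w. performed Tmax \<delta> v0 Lg s \<and> e = {v, w} \<and>
           ((v, w, lam e) \<in> Lg s \<or> (w, v, lam e) \<in> Lg s)"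
proof -
  have pos: "\<forall>e\<in>E. 1 \<le> lam e" using assms(1) unfolding temporal_graph_def by blast
  from assms(1,6) obtain a b where ab: "a \<noteq> b" "e = {a, b}" unfolding temporal_graph_def by blast
  obtain w where w: "e = {v, w}" "w \<noteq> v" using ab assms(7) by (auto simp: insert_commute)
  have "{v, w} \<in> E" using w assms(6) by simp
  from key[OF pos assms(2,4) this refl w(2) assms(5)] assms(8,9) w(1)
  obtain s where "performed Tmax \<delta> v0 Lg s" "(v, w, lam e) \<in> Lg s \<or> (w, v, lam e) \<in> Lg s" by auto
  with w show ?thesis by blast
qed

end
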